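(* Let $G$ be a Ricci-flat graph with maximum degree at most $4$ that contains an edge $(x,y)$ with $d(x)=3$ and $d(y)=4$. Then $(x,y)$ is not contained in any cycle of length $3$.
   Context: All graphs are simple (no loops or multiple edges), undirected, connected and locally finite; $d(x)$ is the degree of $x$ and $d(x,y)$ the graph distance. For a vertex $x$ and $\alpha\in[0,1]$ let $\mu_x^\alpha$ be the probability measure with $\mu_x^\alpha(x)=\alpha$, $\mu_x^\alpha(z)=\frac{1-\alpha}{d(x)}$ for $z\sim x$, and $0$ otherwise. The transportation distance is $W(\mu_1,\mu_2)=\inf_A\sum_{u,v}A(u,v)d(u,v)$ over all couplings $A$ of $\mu_1,\mu_2$. Set $k_\alpha(x,y)=1-W(\mu_x^\alpha,\mu_y^\alpha)/d(x,y)$ and $k(x,y)=\lim_{\alpha\to1}k_\alpha(x,y)/(1-\alpha)$ (Lin–Lu–Yau Ricci curvature). A graph is Ricci-flat if $k(x,y)=0$ for every edge $(x,y)$. An edge is contained in a cycle of length $\ell$ if some cycle subgraph of $G$ with $\ell$ vertices uses that edge. *)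

theory Defs
  imports "HOL-Analysis.Analysis"
begin

definition edge_rel :: "('a \<Rightarrow> 'a \<Rightarrow> bool) \<Rightarrow> ('a \<times> 'a) set" where
  "edge_rel E = {(u, v). E u v}"

definition graph :: "('a \<Rightarrow> 'a \<Rightarrow> bool) \<Rightarrow> bool" where
  "graph E \<longleftrightarrow>
     (\<forall>u v. E u v \<longrightarrow> E v u) \<and>
     (\<forall>u. \<not> E u u) \<and>
     (\<forall>u. finite {v. E u v}) \<and>
     (\<forall>u v. (u, v) \<in> (edge_rel E)\<^sup>*)"

definition deg :: "('a \<Rightarrow> 'a \<Rightarrow> bool) \<Rightarrow> 'a \<Rightarrow> nat" where
  "deg E x = card {z. E x z}"

definition gdist :: "('a \<Rightarrow> 'a \<Rightarrow> bool) \<Rightarrow> 'a \<Rightarrow> 'a \<Rightarrow> nat" where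
  "gdist E u v = (LEAST n. (u, v) \<in> (edge_rel E) ^^ n)"

definition mu :: "('a \<Rightarrow> 'a \<Rightarrow> bool) \<Rightarrow> real \<Rightarrow> 'a \<Rightarrow> 'a \<Rightarrow> real" where
  "mu E \<alpha> x z = (if z = x then \<alpha> else if E x z then (1 - \<alpha>) / real (deg E x) else 0)"

definition supp :: "('a \<Rightarrow> real) \<Rightarrow> 'a set" where
  "supp m = {u. m u \<noteq> 0}"

text \<open>Couplings of two finitely supported measures (any coupling is supported on
  the product of the supports, since it is nonnegative).\<close>
definition coupling :: "('a \<Rightarrow> real) \<Rightarrow> ('a \<Rightarrow> real) \<Rightarrow> ('a \<Rightarrow> 'a \<Rightarrow> real) \<Rightarrow> bool" where
  "coupling m1 m2 A \<longleftrightarrow>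
     (\<forall>u v. A u v \<ge> 0) \<and>
     (\<forall>u v. A u v \<noteq> 0 \<longrightarrow> u \<in> supp m1 \<and> v \<in> supp m2) \<and>
     (\<forall>u \<in> supp m1. (\<Sum>v\<in>supp m2. A u v) = m1 u) \<and>
     (\<forall>v \<in> supp m2. (\<Sum>u\<in>supp m1. A u v) = m2 v)"

definition transport :: "('a \<Rightarrow> 'a \<Rightarrow> bool) \<Rightarrow> ('a \<Rightarrow> real) \<Rightarrow> ('a \<Rightarrow> real) \<Rightarrow> real" where
  "transport E m1 m2 =
     Inf {(\<Sum>(u, v)\<in>supp m1 \<times> supp m2. A u v * real (gdist E u v)) | A. coupling m1 m2 A}"

definition kappa :: "('a \<Rightarrow> 'a \<Rightarrow> bool) \<Rightarrow> real \<Rightarrow> 'a \<Rightarrow> 'a \<Rightarrow> real" where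
  "kappa E \<alpha> x y = 1 - transport E (mu E \<alpha> x) (mu E \<alpha> y) / real (gdist E x y)"

text \<open>Lin--Lu--Yau curvature limit k(x,y) exists and equals 0 on every edge.\<close>
definition ricci_flat :: "('a \<Rightarrow> 'a \<Rightarrow> bool) \<Rightarrow> bool" where
  "ricci_flat E \<longleftrightarrow>
     (\<forall>x y. E x y \<longrightarrow> ((\<lambda>\<alpha>. kappa E \<alpha> x y / (1 - \<alpha>)) \<longlongrightarrow> 0) (at_left 1))"

definition edge_in_cycle :: "('a \<Rightarrow> 'a \<Rightarrow> bool) \<Rightarrow> 'a \<Rightarrow> 'a \<Rightarrow> nat \<Rightarrow> bool" where
  "edge_in_cycle E x y l \<longleftrightarrow>
     (\<exists>vs. length vs = l \<and> l \<ge> 3 \<and> distinct vs \<and>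
        (\<forall>i<l. E (vs ! i) (vs ! ((i + 1) mod l))) \<and>
        (\<exists>i<l. {vs ! i, vs ! ((i + 1) mod l)} = {x, y}))"

end

theory Submission
  imports Defs
begin

lemma graph_sym: "graph E \<Longrightarrow> E u v \<Longrightarrow> E v u" by (auto simp: graph_def)
lemma graph_irrefl: "graph E \<Longrightarrow> \<not> E u u" by (auto simp: graph_def)
lemma graph_fin: "graph E \<Longrightarrow> finite {v. E u v}" by (auto simp: graph_def)
lemma graph_conn: "graph E \<Longrightarrow> (u,v) \<in> (edge_rel E)\<^sup>*" by (auto simp: graph_def)

lemma gdist_le: "(u,v) \<in> (edge_rel E)^^n \<Longrightarrow> gdist E u v \<le> n"
  unfolding gdist_def by (rule Least_le)

lemma gdist_ex: assumes "graph E" shows "(u,v) \<in> (edge_rel E)^^(gdist E u v)"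
proof -
  obtain n where "(u,v) \<in> (edge_rel E)^^n" using graph_conn[OF assms, of u v] rtrancl_power by blast
  then show ?thesis unfolding gdist_def by (rule LeastI)
qed

lemma gdist_0: "gdist E u u = 0"
  using gdist_le[where u=u and v=u and E=E and n=0] by simp

lemma gdist_1: "E u v \<Longrightarrow> gdist E u v \<le> 1"
  using gdist_le[where u=u and v=v and E=E and n=1] by (simp add: edge_rel_def)

lemma gdist_2: "E u s \<Longrightarrow> E s v \<Longrightarrow> gdist E u v \<le> 2"
  using gdist_le[where u=u and v=v and E=E and n="Suc (Suc 0)"] by (auto simp: edge_rel_def relcomp_unfold numeral_2_eq_2)

lemma gdist_3: "E u s \<Longrightarrow> E s t \<Longrightarrow> E t v \<Longrightarrow> gdist E u v \<le> 3"
  using gdist_le[where u=u and v=v and E=E and n="Suc (Suc (Suc 0))"] by (auto simp: edge_rel_def relcomp_unfold numeral_3_eq_3)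

lemma gdist_lt3: assumes "graph E" "gdist E u v < 3"
  shows "u = v \<or> E u v \<or> (\<exists>s. E u s \<and> E s v)"
proof -
  have h: "(u,v) \<in> (edge_rel E)^^(gdist E u v)" by (rule gdist_ex[OF assms(1)])
  have "gdist E u v = 0 \<or> gdist E u v = Suc 0 \<or> gdist E u v = Suc (Suc 0)" using assms(2) by linarith
  then show ?thesis using h by (auto simp: edge_rel_def relcomp_unfold)
qed

lemma gdist_edge: assumes "graph E" "E u v" shows "gdist E u v = 1"
proof -
  have "gdist E u v \<noteq> 0"
  proof
    assume "gdist E u v = 0"
    then have "u = v" using gdist_ex[OF assms(1), of u v] by simp
    then show False using assms graph_irrefl by metis
  qed
  then show ?thesis using gdist_1[where E=E, OF assms(2)] by linarith
qed

fun LA :: "('a \<times> 'a \<times> real) list \<Rightarrow> 'a \<Rightarrow> 'a \<Rightarrow> real" where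
  "LA [] a b = 0"
| "LA ((p,q,c)#L) a b = (if a = p \<and> b = q then c else 0) + LA L a b"

fun rowS :: "('a \<times> 'a \<times> real) list \<Rightarrow> 'a \<Rightarrow> real" where
  "rowS [] a = 0"
| "rowS ((p,q,c)#L) a = (if a = p then c else 0) + rowS L a"

fun colS :: "('a \<times> 'a \<times> real) list \<Rightarrow> 'a \<Rightarrow> real" where
  "colS [] a = 0"
| "colS ((p,q,c)#L) a = (if a = q then c else 0) + colS L a"

fun costL :: "('a \<Rightarrow> 'a \<Rightarrow> bool) \<Rightarrow> ('a \<times> 'a \<times> real) list \<Rightarrow> real" where
  "costL E [] = 0"
| "costL E ((p,q,c)#L) = c * real (gdist E p q) + costL E L"

lemma LA_nonneg: "\<forall>(p,q,c)\<in>set L. c \<ge> 0 \<Longrightarrow> LA L a b \<ge> 0"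
  by (induction L a b rule: LA.induct) auto

lemma LA_nz: "LA L a b \<noteq> 0 \<Longrightarrow> \<exists>c. (a,b,c) \<in> set L"
  by (induction L a b rule: LA.induct) (auto split: if_splits)

lemma LA_row: "finite S \<Longrightarrow> \<forall>(p,q,c)\<in>set L. q \<in> S \<Longrightarrow> (\<Sum>b\<in>S. LA L a b) = rowS L a"
proof (induction L)
  case Nil then show ?case by simp
next
  case (Cons e L)
  obtain p q c where e: "e = (p,q,c)" by (cases e) auto
  have q: "q \<in> S" using Cons.prems e by auto
  have "(\<Sum>b\<in>S. LA (e#L) a b) = (\<Sum>b\<in>S. (if a = p \<and> b = q then c else 0)) + (\<Sum>b\<in>S. LA L a b)"
    by (simp add: e sum.distrib)
  also have "(\<Sum>b\<in>S. (if a = p \<and> b = q then c else 0)) = (if a = p then c else 0)"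
    using q Cons.prems(1) by (simp add: sum.delta')
  finally show ?case using Cons e by auto
qed

lemma LA_col: "finite S \<Longrightarrow> \<forall>(p,q,c)\<in>set L. p \<in> S \<Longrightarrow> (\<Sum>a\<in>S. LA L a b) = colS L b"
proof (induction L)
  case Nil then show ?case by simp
next
  case (Cons e L)
  obtain p q c where e: "e = (p,q,c)" by (cases e) auto
  have q: "p \<in> S" using Cons.prems e by auto
  have "(\<Sum>a\<in>S. LA (e#L) a b) = (\<Sum>a\<in>S. (if a = p \<and> b = q then c else 0)) + (\<Sum>a\<in>S. LA L a b)"
    by (simp add: e sum.distrib)
  also have "(\<Sum>a\<in>S. (if a = p \<and> b = q then c else 0)) = (if b = q then c else 0)"
    using q Cons.prems(1) by (simp add: sum.delta')
  finally show ?case using Cons e by auto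
qed

lemma LA_cost: "finite S1 \<Longrightarrow> finite S2 \<Longrightarrow> \<forall>(p,q,c)\<in>set L. p \<in> S1 \<and> q \<in> S2 \<Longrightarrow>
  (\<Sum>(u,v)\<in>S1\<times>S2. LA L u v * real (gdist E u v)) = costL E L"
proof (induction L)
  case Nil then show ?case by simp
next
  case (Cons e L)
  obtain p q c where e: "e = (p,q,c)" by (cases e) auto
  have pq: "(p,q) \<in> S1 \<times> S2" using Cons.prems e by auto
  have "(\<Sum>(u,v)\<in>S1\<times>S2. LA (e#L) u v * real (gdist E u v)) =
     (\<Sum>uv\<in>S1\<times>S2. (if uv = (p,q) then c * real (gdist E p q) else 0)) + (\<Sum>(u,v)\<in>S1\<times>S2. LA L u v * real (gdist E u v))"
    unfolding sum.distrib[symmetric] by (rule sum.cong) (auto simp: e distrib_right split: if_splits)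
  also have "(\<Sum>uv\<in>S1\<times>S2. (if uv = (p,q) then c * real (gdist E p q) else 0)) = c * real (gdist E p q)"
    using pq Cons.prems(1,2) by (simp add: sum.delta')
  finally show ?case using Cons e by auto
qed

lemma bdd_costs: "bdd_below {(\<Sum>(u, v)\<in>supp m1 \<times> supp m2. A u v * real (gdist E u v)) | A. coupling m1 m2 A}"
  unfolding bdd_below_def
  by (rule exI[of _ 0]) (auto intro!: sum_nonneg simp: coupling_def)

lemma transport_le_list:
  assumes "supp m1 = S1" "supp m2 = S2" "finite S1" "finite S2"
    "\<forall>(p,q,c)\<in>set L. p \<in> S1 \<and> q \<in> S2 \<and> c \<ge> 0"
    "\<forall>a\<in>S1. rowS L a = m1 a" "\<forall>b\<in>S2. colS L b = m2 b"
  shows "transport E m1 m2 \<le> costL E L"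
proof -
  have c: "coupling m1 m2 (LA L)"
    unfolding coupling_def
  proof (intro conjI allI impI ballI)
    fix u v show "LA L u v \<ge> 0" using assms(5) by (intro LA_nonneg) auto
  next
    fix u v assume "LA L u v \<noteq> 0"
    then obtain c where "(u,v,c) \<in> set L" using LA_nz[of L u v] by blast
    then show "u \<in> supp m1" "v \<in> supp m2" using assms(1,2,5) by auto
  next
    fix u assume "u \<in> supp m1"
    then show "(\<Sum>v\<in>supp m2. LA L u v) = m1 u" using assms
      by (subst LA_row) auto
  next
    fix v assume "v \<in> supp m2"
    then show "(\<Sum>u\<in>supp m1. LA L u v) = m2 v" using assms
      by (subst LA_col) auto
  qed
  have "transport E m1 m2 \<le> (\<Sum>(u, v)\<in>supp m1 \<times> supp m2. LA L u v * real (gdist E u v))"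
    unfolding transport_def by (rule cInf_lower) (use c bdd_costs in auto)
  also have "\<dots> = costL E L" using assms by (subst LA_cost) auto
  finally show ?thesis .
qed

lemma supp_mu: assumes "graph E" "0 < \<alpha>" "\<alpha> < 1" "deg E x > 0"
  shows "supp (mu E \<alpha> x) = insert x {v. E x v}"
  using assms graph_irrefl[OF assms(1), of x]
  by (auto simp: supp_def mu_def split: if_splits)

lemma mu_nonneg: "\<alpha> \<le> 1 \<Longrightarrow> 0 \<le> \<alpha> \<Longrightarrow> mu E \<alpha> x v \<ge> 0"
  by (auto simp: mu_def)

lemma mu_center: "mu E \<alpha> x x = \<alpha>" by (simp add: mu_def)
lemma mu_nb: "graph E \<Longrightarrow> E x v \<Longrightarrow> mu E \<alpha> x v = (1 - \<alpha>) / real (deg E x)"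
  using graph_irrefl[of E x] by (auto simp: mu_def)

lemma mu_sum: assumes "graph E" "0 < \<alpha>" "\<alpha> < 1" "deg E x > 0"
  shows "(\<Sum>v\<in>supp (mu E \<alpha> x). mu E \<alpha> x v) = 1"
proof -
  have f: "finite {v. E x v}" using graph_fin[OF assms(1)] .
  have nx: "x \<notin> {v. E x v}" using graph_irrefl[OF assms(1)] by auto
  have "(\<Sum>v\<in>supp (mu E \<alpha> x). mu E \<alpha> x v) = \<alpha> + (\<Sum>v\<in>{v. E x v}. mu E \<alpha> x v)"
    using supp_mu[OF assms] f nx by (simp add: mu_center)
  also have "(\<Sum>v\<in>{v. E x v}. mu E \<alpha> x v) = (\<Sum>v\<in>{v. E x v}. (1 - \<alpha>) / real (deg E x))"
    by (rule sum.cong) (auto simp: mu_nb[OF assms(1)])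
  also have "\<dots> = 1 - \<alpha>" using assms(4) by (simp add: deg_def)
  finally show ?thesis by simp
qed

lemma prod_coupling: assumes "graph E" "0 < \<alpha>" "\<alpha> < 1" "deg E x > 0" "deg E y > 0"
  shows "coupling (mu E \<alpha> x) (mu E \<alpha> y) (\<lambda>u v. mu E \<alpha> x u * mu E \<alpha> y v)"
  unfolding coupling_def
proof (intro conjI allI impI ballI)
  fix u v show "0 \<le> mu E \<alpha> x u * mu E \<alpha> y v" using assms by (simp add: mu_nonneg)
next
  fix u v assume "mu E \<alpha> x u * mu E \<alpha> y v \<noteq> 0"
  then show "u \<in> supp (mu E \<alpha> x)" "v \<in> supp (mu E \<alpha> y)" by (auto simp: supp_def)
next
  fix u
  have "(\<Sum>v\<in>supp (mu E \<alpha> y). mu E \<alpha> x u * mu E \<alpha> y v) = mu E \<alpha> x u * (\<Sum>v\<in>supp (mu E \<alpha> y). mu E \<alpha> y v)"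
    by (simp only: sum_distrib_left)
  then show "(\<Sum>v\<in>supp (mu E \<alpha> y). mu E \<alpha> x u * mu E \<alpha> y v) = mu E \<alpha> x u"
    using mu_sum[OF assms(1,2,3,5)] by simp
next
  fix v
  have "(\<Sum>u\<in>supp (mu E \<alpha> x). mu E \<alpha> x u * mu E \<alpha> y v) = (\<Sum>u\<in>supp (mu E \<alpha> x). mu E \<alpha> x u) * mu E \<alpha> y v"
    by (simp only: sum_distrib_right)
  then show "(\<Sum>u\<in>supp (mu E \<alpha> x). mu E \<alpha> x u * mu E \<alpha> y v) = mu E \<alpha> y v"
    using mu_sum[OF assms(1,2,3,4)] by simp
qed

lemma cost_ge_f:
  assumes c: "coupling m1 m2 A" and f1: "finite (supp m1)" and f2: "finite (supp m2)"
    and L: "\<forall>a\<in>supp m1. \<forall>b\<in>supp m2. f a - f b \<le> real (gdist E a b)"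
  shows "(\<Sum>(u,v)\<in>supp m1 \<times> supp m2. A u v * real (gdist E u v)) \<ge>
     (\<Sum>a\<in>supp m1. f a * m1 a) - (\<Sum>b\<in>supp m2. f b * m2 b)"
proof -
  let ?S1 = "supp m1" and ?S2 = "supp m2"
  have A0: "\<And>u v. A u v \<ge> 0" using c by (auto simp: coupling_def)
  have r: "\<And>u. u \<in> ?S1 \<Longrightarrow> (\<Sum>v\<in>?S2. A u v) = m1 u" using c by (auto simp: coupling_def)
  have cl: "\<And>v. v \<in> ?S2 \<Longrightarrow> (\<Sum>u\<in>?S1. A u v) = m2 v" using c by (auto simp: coupling_def)
  have "(\<Sum>(u,v)\<in>?S1 \<times> ?S2. A u v * real (gdist E u v)) \<ge> (\<Sum>(u,v)\<in>?S1 \<times> ?S2. A u v * (f u - f v))"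
    using L A0 by (intro sum_mono) (auto intro: mult_left_mono)
  moreover have "(\<Sum>(u,v)\<in>?S1 \<times> ?S2. A u v * (f u - f v)) =
       (\<Sum>u\<in>?S1. \<Sum>v\<in>?S2. A u v * f u) - (\<Sum>u\<in>?S1. \<Sum>v\<in>?S2. A u v * f v)"
    by (simp add: sum.cartesian_product[symmetric] sum_subtractf right_diff_distrib)
  moreover have "(\<Sum>u\<in>?S1. \<Sum>v\<in>?S2. A u v * f u) = (\<Sum>a\<in>?S1. f a * m1 a)"
  proof (rule sum.cong[OF refl])
    fix u assume u: "u \<in> ?S1"
    have "(\<Sum>v\<in>?S2. A u v * f u) = (\<Sum>v\<in>?S2. A u v) * f u" by (simp only: sum_distrib_right)
    then show "(\<Sum>v\<in>?S2. A u v * f u) = f u * m1 u" using r[OF u] by simp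
  qed
  moreover have "(\<Sum>u\<in>?S1. \<Sum>v\<in>?S2. A u v * f v) = (\<Sum>b\<in>?S2. f b * m2 b)"
  proof (subst sum.swap, rule sum.cong[OF refl])
    fix v assume v: "v \<in> ?S2"
    have "(\<Sum>u\<in>?S1. A u v * f v) = (\<Sum>u\<in>?S1. A u v) * f v" by (simp only: sum_distrib_right)
    then show "(\<Sum>u\<in>?S1. A u v * f v) = f v * m2 v" using cl[OF v] by simp
  qed
  ultimately show ?thesis by linarith
qed

lemma transport_ge_f:
  assumes g: "graph E" and a: "0 < \<alpha>" "\<alpha> < 1" and d: "deg E x > 0" "deg E y > 0"
    and L: "\<forall>a\<in>supp (mu E \<alpha> x). \<forall>b\<in>supp (mu E \<alpha> y). f a - f b \<le> real (gdist E a b)"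
  shows "transport E (mu E \<alpha> x) (mu E \<alpha> y) \<ge>
     (\<Sum>a\<in>supp (mu E \<alpha> x). f a * mu E \<alpha> x a) - (\<Sum>b\<in>supp (mu E \<alpha> y). f b * mu E \<alpha> y b)"
  unfolding transport_def
proof (rule cInf_greatest)
  show "{(\<Sum>(u, v)\<in>supp (mu E \<alpha> x) \<times> supp (mu E \<alpha> y). A u v * real (gdist E u v)) |A. coupling (mu E \<alpha> x) (mu E \<alpha> y) A} \<noteq> {}"
    using prod_coupling[OF g a d] by blast
next
  have f1: "finite (supp (mu E \<alpha> x))" "finite (supp (mu E \<alpha> y))"
    using supp_mu[OF g a d(1)] supp_mu[OF g a d(2)] graph_fin[OF g] by auto
  fix r assume "r \<in> {(\<Sum>(u, v)\<in>supp (mu E \<alpha> x) \<times> supp (mu E \<alpha> y). A u v * real (gdist E u v)) |A. coupling (mu E \<alpha> x) (mu E \<alpha> y) A}"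
  then obtain A where "coupling (mu E \<alpha> x) (mu E \<alpha> y) A" and r: "r = (\<Sum>(u, v)\<in>supp (mu E \<alpha> x) \<times> supp (mu E \<alpha> y). A u v * real (gdist E u v))" by blast
  then show "(\<Sum>a\<in>supp (mu E \<alpha> x). f a * mu E \<alpha> x a) - (\<Sum>b\<in>supp (mu E \<alpha> y). f b * mu E \<alpha> y b) \<le> r"
    using cost_ge_f[OF _ f1 L] by simp
qed

lemma notflat_pos:
  assumes g: "graph E" and e: "E x y" and c: "c > 0"
    and h: "\<And>\<alpha>. 1/2 < \<alpha> \<Longrightarrow> \<alpha> < 1 \<Longrightarrow> transport E (mu E \<alpha> x) (mu E \<alpha> y) \<le> 1 - c * (1 - \<alpha>)"
  shows "\<not> ricci_flat E"
proof
  assume "ricci_flat E"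
  then have t: "((\<lambda>\<alpha>. kappa E \<alpha> x y / (1 - \<alpha>)) \<longlongrightarrow> 0) (at_left 1)"
    using e by (auto simp: ricci_flat_def)
  have "eventually (\<lambda>\<alpha>. \<alpha> \<in> {1/2<..<(1::real)}) (at_left 1)" by (rule eventually_at_left_real) simp
  then have "eventually (\<lambda>\<alpha>. c \<le> kappa E \<alpha> x y / (1 - \<alpha>)) (at_left 1)"
  proof (rule eventually_mono)
    fix \<alpha> :: real assume "\<alpha> \<in> {1/2<..<1}"
    then have a: "1/2 < \<alpha>" "\<alpha> < 1" by auto
    have "kappa E \<alpha> x y = 1 - transport E (mu E \<alpha> x) (mu E \<alpha> y)"
      by (simp add: kappa_def gdist_edge[OF g e])
    then have "kappa E \<alpha> x y \<ge> c * (1 - \<alpha>)" using h[OF a] by simp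
    then show "c \<le> kappa E \<alpha> x y / (1 - \<alpha>)" using a by (simp add: pos_le_divide_eq)
  qed
  from tendsto_lowerbound[OF t this] have "c \<le> 0" by simp
  with c show False by simp
qed

lemma notflat_neg:
  assumes g: "graph E" and e: "E x y" and c: "c > 0"
    and h: "\<And>\<alpha>. 1/2 < \<alpha> \<Longrightarrow> \<alpha> < 1 \<Longrightarrow> transport E (mu E \<alpha> x) (mu E \<alpha> y) \<ge> 1 + c * (1 - \<alpha>)"
  shows "\<not> ricci_flat E"
proof
  assume "ricci_flat E"
  then have t: "((\<lambda>\<alpha>. kappa E \<alpha> x y / (1 - \<alpha>)) \<longlongrightarrow> 0) (at_left 1)"
    using e by (auto simp: ricci_flat_def)
  have "eventually (\<lambda>\<alpha>. \<alpha> \<in> {1/2<..<(1::real)}) (at_left 1)" by (rule eventually_at_left_real) simp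
  then have "eventually (\<lambda>\<alpha>. kappa E \<alpha> x y / (1 - \<alpha>) \<le> -c) (at_left 1)"
  proof (rule eventually_mono)
    fix \<alpha> :: real assume "\<alpha> \<in> {1/2<..<1}"
    then have a: "1/2 < \<alpha>" "\<alpha> < 1" by auto
    have "kappa E \<alpha> x y = 1 - transport E (mu E \<alpha> x) (mu E \<alpha> y)"
      by (simp add: kappa_def gdist_edge[OF g e])
    then have "kappa E \<alpha> x y \<le> -c * (1 - \<alpha>)" using h[OF a] by simp
    then show "kappa E \<alpha> x y / (1 - \<alpha>) \<le> -c" using a by (simp add: divide_le_eq)
  qed
  from tendsto_upperbound[OF t this] have "0 \<le> -c" by simp
  with c show False by simp
qed


lemma mlm: "(c::real) \<ge> 0 \<Longrightarrow> real g \<le> k \<Longrightarrow> c * real g \<le> c * k"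
  by (rule mult_left_mono)

lemma L0:
  assumes g: "graph E" and Nx: "{v. E x v} = {y,z,w}" and Ny: "{v. E y v} = {x,z,w,u}"
    and d: "distinct [x,y,z,w,u]"
  shows "\<not> ricci_flat E"
proof -
  have Ex: "\<And>v. E x v \<longleftrightarrow> v \<in> {y,z,w}" and Ey: "\<And>v. E y v \<longleftrightarrow> v \<in> {x,z,w,u}"
    using Nx Ny by blast+
  have e: "E x y" "E x z" "E x w" "E y x" "E y z" "E y w" "E y u" using Ex Ey by auto
  have dx: "deg E x = 3" unfolding deg_def Nx using d by simp
  have dy: "deg E y = 4" unfolding deg_def Ny using d by simp
  have neq: "x \<noteq> y" "x \<noteq> z" "x \<noteq> w" "x \<noteq> u" "y \<noteq> z" "y \<noteq> w" "y \<noteq> u" "z \<noteq> w" "z \<noteq> u" "w \<noteq> u"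
    "y \<noteq> x" "z \<noteq> x" "w \<noteq> x" "u \<noteq> x" "z \<noteq> y" "w \<noteq> y" "u \<noteq> y" "w \<noteq> z" "u \<noteq> z" "u \<noteq> w"
    using d by auto
  show ?thesis
  proof (rule notflat_pos[OF g e(1), of "5/6"])
    fix \<alpha> :: real assume a: "1/2 < \<alpha>" "\<alpha> < 1"
    define b where "b = 1 - \<alpha>"
    have b: "b > 0" "\<alpha> = 1 - b" "b < 1/2" using a by (auto simp: b_def)
    define L where "L = [(x,x,b/4),(z,z,b/4),(w,w,b/4),(y,y,b/3),(x,y,\<alpha>-b/3),(x,u,b/12),(z,u,b/12),(w,u,b/12)]"
    have S1: "supp (mu E \<alpha> x) = {x,y,z,w}" using supp_mu[OF g, of \<alpha> x] a dx Nx by simp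
    have S2: "supp (mu E \<alpha> y) = {y,x,z,w,u}" using supp_mu[OF g, of \<alpha> y] a dy Ny by simp
    have "transport E (mu E \<alpha> x) (mu E \<alpha> y) \<le> costL E L"
      apply (rule transport_le_list[OF S1 S2])
      apply simp
      apply simp
      apply (insert b(1,3), simp add: L_def neq b(2))
      apply (simp add: L_def neq mu_center mu_nb[OF g] e dx dy b(2))
      apply (simp add: L_def neq mu_center mu_nb[OF g] e dx dy b(2))
      done
    also have "costL E L \<le> 1 - 5/6 * (1 - \<alpha>)"
    proof -
      have "b/12 * real (gdist E x u) \<le> b/12 * 2" by (rule mlm) (use b gdist_2[where E=E, OF e(1) e(7)] in auto)
      moreover have "b/12 * real (gdist E z u) \<le> b/12 * 2" by (rule mlm) (use b gdist_2[where E=E, OF graph_sym[OF g e(5)] e(7)] in auto)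
      moreover have "b/12 * real (gdist E w u) \<le> b/12 * 2" by (rule mlm) (use b gdist_2[where E=E, OF graph_sym[OF g e(6)] e(7)] in auto)
      moreover have "costL E L = ((1-b)-b/3) + b/12 * real (gdist E x u) + b/12 * real (gdist E z u) + b/12 * real (gdist E w u)" unfolding L_def by (simp add: b(2) gdist_0 gdist_edge[OF g e(1)])
      ultimately have "costL E L \<le> 1 - 5/6 * b" using b by linarith
      then show ?thesis by (simp add: b_def)
    qed
    finally show "transport E (mu E \<alpha> x) (mu E \<alpha> y) \<le> 1 - 5/6 * (1 - \<alpha>)" .
  qed (simp)
qed


lemma L1:
  assumes g: "graph E" and Nx: "{v. E x v} = {y,z,w}" and Ny: "{v. E y v} = {x,z,u,u'}"
    and d: "distinct [x,y,z,w,u,u']" and wu: "gdist E w u \<le> 2"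
  shows "\<not> ricci_flat E"
proof -
  have Ex: "\<And>v. E x v \<longleftrightarrow> v \<in> {y,z,w}" and Ey: "\<And>v. E y v \<longleftrightarrow> v \<in> {x,z,u,u'}"
    using Nx Ny by blast+
  have e: "E x y" "E x z" "E x w" "E y x" "E y z" "E y u" "E y u'" using Ex Ey by auto
  have dx: "deg E x = 3" unfolding deg_def Nx using d by simp
  have dy: "deg E y = 4" unfolding deg_def Ny using d by simp
  have neq: "x \<noteq> y" "x \<noteq> z" "x \<noteq> w" "x \<noteq> u" "y \<noteq> z" "y \<noteq> w" "y \<noteq> u" "z \<noteq> w" "z \<noteq> u" "w \<noteq> u"
    "y \<noteq> x" "z \<noteq> x" "w \<noteq> x" "u \<noteq> x" "z \<noteq> y" "w \<noteq> y" "u \<noteq> y" "w \<noteq> z" "u \<noteq> z" "u \<noteq> w"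
    "u' \<noteq> x" "u' \<noteq> y" "u' \<noteq> z" "u' \<noteq> w" "u' \<noteq> u" "x \<noteq> u'" "y \<noteq> u'" "z \<noteq> u'" "w \<noteq> u'" "u \<noteq> u'"
    using d by auto
  show ?thesis
  proof (rule notflat_pos[OF g e(1), of "1/4"])
    fix \<alpha> :: real assume a: "1/2 < \<alpha>" "\<alpha> < 1"
    define b where "b = 1 - \<alpha>"
    have b: "b > 0" "\<alpha> = 1 - b" "b < 1/2" using a by (auto simp: b_def)
    define L where "L = [(x,x,b/4),(z,z,b/4),(y,y,b/3),(x,y,\<alpha>-b/3),(x,u',b/12),(z,u',b/12),(w,u',b/12),(w,u,b/4)]"
    have S1: "supp (mu E \<alpha> x) = {x,y,z,w}" using supp_mu[OF g, of \<alpha> x] a dx Nx by simp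
    have S2: "supp (mu E \<alpha> y) = {y,x,z,u,u'}" using supp_mu[OF g, of \<alpha> y] a dy Ny by simp
    have "transport E (mu E \<alpha> x) (mu E \<alpha> y) \<le> costL E L"
      apply (rule transport_le_list[OF S1 S2])
      apply simp
      apply simp
      apply (insert b(1,3), simp add: L_def neq b(2))
      apply (simp add: L_def neq mu_center mu_nb[OF g] e dx dy b(2))
      apply (simp add: L_def neq mu_center mu_nb[OF g] e dx dy b(2))
      done
    also have "costL E L \<le> 1 - 1/4 * (1 - \<alpha>)"
    proof -
      have "b/12 * real (gdist E x u') \<le> b/12 * 2" by (rule mlm) (use b gdist_2[where E=E, OF e(1) e(7)] in auto)
      moreover have "b/12 * real (gdist E z u') \<le> b/12 * 2" by (rule mlm) (use b gdist_2[where E=E, OF graph_sym[OF g e(5)] e(7)] in auto)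
      moreover have "b/12 * real (gdist E w u') \<le> b/12 * 3" by (rule mlm) (use b gdist_3[where E=E, OF graph_sym[OF g e(3)] e(1) e(7)] in auto)
      moreover have "b/4 * real (gdist E w u) \<le> b/4 * 2" by (rule mlm) (use b wu in auto)
      moreover have "costL E L = ((1-b)-b/3) + b/12 * real (gdist E x u') + b/12 * real (gdist E z u') + b/12 * real (gdist E w u') + b/4 * real (gdist E w u)" unfolding L_def by (simp add: b(2) gdist_0 gdist_edge[OF g e(1)])
      ultimately have "costL E L \<le> 1 - 1/4 * b" using b by linarith
      then show ?thesis by (simp add: b_def)
    qed
    finally show "transport E (mu E \<alpha> x) (mu E \<alpha> y) \<le> 1 - 1/4 * (1 - \<alpha>)" .
  qed (simp)
qed


lemma L2a:
  assumes g: "graph E" and Nx: "{v. E x v} = {y,z,w}" and Nz: "{v. E z v} = {x,y}"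
    and d: "distinct [x,y,z,w]"
  shows "\<not> ricci_flat E"
proof -
  have Ex: "\<And>v. E x v \<longleftrightarrow> v \<in> {y,z,w}" and Ez: "\<And>v. E z v \<longleftrightarrow> v \<in> {x,y}"
    using Nx Nz by blast+
  have e: "E x y" "E x z" "E x w" "E z x" "E z y" using Ex Ez by auto
  have dx: "deg E x = 3" unfolding deg_def Nx using d by simp
  have dz: "deg E z = 2" unfolding deg_def Nz using d by simp
  have neq: "x \<noteq> y" "x \<noteq> z" "x \<noteq> w" "y \<noteq> z" "y \<noteq> w" "z \<noteq> w"
    "y \<noteq> x" "z \<noteq> x" "w \<noteq> x" "z \<noteq> y" "w \<noteq> y" "w \<noteq> z"
    using d by auto
  show ?thesis
  proof (rule notflat_pos[OF g e(2), of "5/6"])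
    fix \<alpha> :: real assume a: "1/2 < \<alpha>" "\<alpha> < 1"
    define b where "b = 1 - \<alpha>"
    have b: "b > 0" "\<alpha> = 1 - b" "b < 1/2" using a by (auto simp: b_def)
    define L where "L = [(x,x,b/2),(x,z,\<alpha>-b/2),(y,y,b/3),(z,z,b/3),(w,z,b/6),(w,y,b/6)]"
    have S1: "supp (mu E \<alpha> x) = {x,y,z,w}" using supp_mu[OF g, of \<alpha> x] a dx Nx by simp
    have S2: "supp (mu E \<alpha> z) = {z,x,y}" using supp_mu[OF g, of \<alpha> z] a dz Nz by simp
    have "transport E (mu E \<alpha> x) (mu E \<alpha> z) \<le> costL E L"
      apply (rule transport_le_list[OF S1 S2])
      apply simp
      apply simp
      apply (insert b(1,3), simp add: L_def neq b(2))
      apply (simp add: L_def neq mu_center mu_nb[OF g] e dx dz b(2))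
      apply (simp add: L_def neq mu_center mu_nb[OF g] e dx dz b(2))
      done
    also have "costL E L \<le> 1 - 5/6 * (1 - \<alpha>)"
    proof -
      have "b/6 * real (gdist E w z) \<le> b/6 * 2" by (rule mlm) (use b gdist_2[where E=E, OF graph_sym[OF g e(3)] e(2)] in auto)
      moreover have "b/6 * real (gdist E w y) \<le> b/6 * 2" by (rule mlm) (use b gdist_2[where E=E, OF graph_sym[OF g e(3)] e(1)] in auto)
      moreover have "costL E L = ((1-b)-b/2) + b/6 * real (gdist E w z) + b/6 * real (gdist E w y)" unfolding L_def by (simp add: b(2) gdist_0 gdist_edge[OF g e(2)])
      ultimately have "costL E L \<le> 1 - 5/6 * b" using b by linarith
      then show ?thesis by (simp add: b_def)
    qed
    finally show "transport E (mu E \<alpha> x) (mu E \<alpha> z) \<le> 1 - 5/6 * (1 - \<alpha>)" .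
  qed (simp)
qed


lemma L2b:
  assumes g: "graph E" and Nx: "{v. E x v} = {y,z,w}" and Nz: "{v. E z v} = {x,y,v}"
    and d: "distinct [x,y,z,w]" and d2: "distinct [x,y,z,v]"
  shows "\<not> ricci_flat E"
proof -
  have Ex: "\<And>t. E x t \<longleftrightarrow> t \<in> {y,z,w}" and Ez: "\<And>t. E z t \<longleftrightarrow> t \<in> {x,y,v}"
    using Nx Nz by blast+
  have e: "E x y" "E x z" "E x w" "E z x" "E z y" "E z v" using Ex Ez by auto
  have dx: "deg E x = 3" unfolding deg_def Nx using d by simp
  have dz: "deg E z = 3" unfolding deg_def Nz using d2 by simp
  have neq: "x \<noteq> y" "x \<noteq> z" "x \<noteq> w" "y \<noteq> z" "y \<noteq> w" "z \<noteq> w"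
    "y \<noteq> x" "z \<noteq> x" "w \<noteq> x" "z \<noteq> y" "w \<noteq> y" "w \<noteq> z"
    "v \<noteq> x" "v \<noteq> y" "v \<noteq> z" "x \<noteq> v" "y \<noteq> v" "z \<noteq> v"
    using d d2 by auto
  show ?thesis
  proof (rule notflat_pos[OF g e(2), of "1/3"])
    fix \<alpha> :: real assume a: "1/2 < \<alpha>" "\<alpha> < 1"
    define b where "b = 1 - \<alpha>"
    have b: "b > 0" "\<alpha> = 1 - b" "b < 1/2" using a by (auto simp: b_def)
    define L where "L = [(x,x,b/3),(x,z,\<alpha>-b/3),(y,y,b/3),(z,z,b/3),(w,v,b/3)]"
    have S1: "supp (mu E \<alpha> x) = {x,y,z,w}" using supp_mu[OF g, of \<alpha> x] a dx Nx by simp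
    have S2: "supp (mu E \<alpha> z) = {z,x,y,v}" using supp_mu[OF g, of \<alpha> z] a dz Nz by simp
    have "transport E (mu E \<alpha> x) (mu E \<alpha> z) \<le> costL E L"
      apply (rule transport_le_list[OF S1 S2])
      apply simp
      apply simp
      apply (insert b(1,3), simp add: L_def neq b(2))
      apply (simp add: L_def neq mu_center mu_nb[OF g] e dx dz b(2))
      apply (simp add: L_def neq mu_center mu_nb[OF g] e dx dz b(2))
      done
    also have "costL E L \<le> 1 - 1/3 * (1 - \<alpha>)"
    proof -
      have "b/3 * real (gdist E w v) \<le> b/3 * 3" by (rule mlm) (use b gdist_3[where E=E, OF graph_sym[OF g e(3)] e(2) e(6)] in auto)
      moreover have "costL E L = ((1-b)-b/3) + b/3 * real (gdist E w v)" unfolding L_def by (simp add: b(2) gdist_0 gdist_edge[OF g e(2)])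
      ultimately have "costL E L \<le> 1 - 1/3 * b" using b by linarith
      then show ?thesis by (simp add: b_def)
    qed
    finally show "transport E (mu E \<alpha> x) (mu E \<alpha> z) \<le> 1 - 1/3 * (1 - \<alpha>)" .
  qed (simp)
qed


lemma Lleaf:
  assumes g: "graph E" and Nx: "{v. E x v} = {y,z,w}" and Nw: "{v. E w v} = {x}"
    and d: "distinct [x,y,z,w]"
  shows "\<not> ricci_flat E"
proof -
  have Ex: "\<And>t. E x t \<longleftrightarrow> t \<in> {y,z,w}" and Ew: "\<And>t. E w t \<longleftrightarrow> t \<in> {x}"
    using Nx Nw by blast+
  have e: "E x y" "E x z" "E x w" "E w x" using Ex Ew by auto
  have dx: "deg E x = 3" unfolding deg_def Nx using d by simp
  have dw: "deg E w = 1" unfolding deg_def Nw by simp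
  have neq: "x \<noteq> y" "x \<noteq> z" "x \<noteq> w" "y \<noteq> z" "y \<noteq> w" "z \<noteq> w"
    "y \<noteq> x" "z \<noteq> x" "w \<noteq> x" "z \<noteq> y" "w \<noteq> y" "w \<noteq> z"
    using d by auto
  show ?thesis
  proof (rule notflat_pos[OF g e(3), of "2/3"])
    fix \<alpha> :: real assume a: "1/2 < \<alpha>" "\<alpha> < 1"
    define b where "b = 1 - \<alpha>"
    have b: "b > 0" "\<alpha> = 1 - b" "b < 1/2" using a by (auto simp: b_def)
    define L where "L = [(x,x,b),(x,w,\<alpha>-b),(w,w,b/3),(y,w,b/3),(z,w,b/3)]"
    have S1: "supp (mu E \<alpha> x) = {x,y,z,w}" using supp_mu[OF g, of \<alpha> x] a dx Nx by simp
    have S2: "supp (mu E \<alpha> w) = {w,x}" using supp_mu[OF g, of \<alpha> w] a dw Nw by simp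
    have "transport E (mu E \<alpha> x) (mu E \<alpha> w) \<le> costL E L"
      apply (rule transport_le_list[OF S1 S2])
      apply simp
      apply simp
      apply (insert b(1,3), simp add: L_def neq b(2))
      apply (simp add: L_def neq mu_center mu_nb[OF g] e dx dw b(2))
      apply (simp add: L_def neq mu_center mu_nb[OF g] e dx dw b(2))
      done
    also have "costL E L \<le> 1 - 2/3 * (1 - \<alpha>)"
    proof -
      have "b/3 * real (gdist E y w) \<le> b/3 * 2" by (rule mlm) (use b gdist_2[where E=E, OF graph_sym[OF g e(1)] e(3)] in auto)
      moreover have "b/3 * real (gdist E z w) \<le> b/3 * 2" by (rule mlm) (use b gdist_2[where E=E, OF graph_sym[OF g e(2)] e(3)] in auto)
      moreover have "costL E L = ((1-b)-b) + b/3 * real (gdist E y w) + b/3 * real (gdist E z w)" unfolding L_def by (simp add: b(2) gdist_0 gdist_edge[OF g e(3)])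
      ultimately have "costL E L \<le> 1 - 2/3 * b" using b by linarith
      then show ?thesis by (simp add: b_def)
    qed
    finally show "transport E (mu E \<alpha> x) (mu E \<alpha> w) \<le> 1 - 2/3 * (1 - \<alpha>)" .
  qed (simp)
qed



lemma gdist_ge1: assumes "graph E" "u \<noteq> v" shows "gdist E u v \<ge> 1"
proof (rule ccontr)
  assume "\<not> ?thesis" then have "gdist E u v = 0" by simp
  then show False using gdist_ex[OF assms(1), of u v] assms(2) by simp
qed

lemma gdist_ge2: assumes "graph E" "u \<noteq> v" "\<not> E u v" shows "gdist E u v \<ge> 2"
proof (rule ccontr)
  assume "\<not> ?thesis" then have "gdist E u v = 0 \<or> gdist E u v = Suc 0" by linarith
  then show False using gdist_ex[OF assms(1), of u v] assms(2,3) by (auto simp: edge_rel_def)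
qed

lemma gdist_ge3: assumes "graph E" "u \<noteq> v" "\<not> E u v" "\<not> (\<exists>s. E u s \<and> E s v)" shows "gdist E u v \<ge> 3"
  using gdist_lt3[OF assms(1), of u v] assms by force

lemma L3:
  assumes g: "graph E" and Nx: "{v. E x v} = {y,z,w}" and d: "distinct [x,y,z,w]"
    and dw: "deg E w \<ge> 2"
    and yw: "\<not> E y w" and zw: "\<not> E z w"
    and far: "\<And>t. E w t \<Longrightarrow> t \<noteq> x \<Longrightarrow> gdist E y t \<ge> 3 \<and> gdist E z t \<ge> 3"
  shows "\<not> ricci_flat E"
proof -
  have Ex: "\<And>t. E x t \<longleftrightarrow> t \<in> {y,z,w}" using Nx by blast
  have e: "E x y" "E x z" "E x w" "E w x" using Ex graph_sym[OF g] by auto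
  have dx: "deg E x = 3" unfolding deg_def Nx using d by simp
  have neq: "x \<noteq> y" "x \<noteq> z" "x \<noteq> w" "y \<noteq> z" "y \<noteq> w" "z \<noteq> w"
    "y \<noteq> x" "z \<noteq> x" "w \<noteq> x" "z \<noteq> y" "w \<noteq> y" "w \<noteq> z"
    using d by auto
  have wy: "\<not> E w y" "\<not> E w z" using yw zw graph_sym[OF g] by blast+
  have finw: "finite {t. E w t}" using graph_fin[OF g] .
  define f :: "'a \<Rightarrow> real" where "f = (\<lambda>v. if v = x then 1 else if v = y \<or> v = z then 2 else if v = w then 0 else -1)"
  have fx: "f x = 1" "f y = 2" "f z = 2" "f w = 0" using neq by (auto simp: f_def)
  have ft: "\<And>t. E w t \<Longrightarrow> t \<noteq> x \<Longrightarrow> f t = -1"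
    using wy graph_irrefl[OF g, of w] neq by (auto simp: f_def)
  have sumf: "(\<Sum>t\<in>{t. E w t}. f t) \<le> 0"
  proof -
    have xin: "x \<in> {t. E w t}" using e by simp
    have "(\<Sum>t\<in>{t. E w t}. f t) = f x + (\<Sum>t\<in>{t. E w t} - {x}. f t)"
      using sum.remove[OF finw xin] by simp
    also have "(\<Sum>t\<in>{t. E w t} - {x}. f t) = (\<Sum>t\<in>{t. E w t} - {x}. -1)"
      by (rule sum.cong) (auto simp: ft)
    also have "\<dots> = - real (card ({t. E w t} - {x}))" by simp
    also have "card ({t. E w t} - {x}) = deg E w - 1" using xin finw by (simp add: deg_def)
    finally show ?thesis using dw fx by simp
  qed
  show ?thesis
  proof (rule notflat_neg[OF g e(3), of "1/3"])
    fix \<alpha> :: real assume a: "1/2 < \<alpha>" "\<alpha> < 1"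
    define b where "b = 1 - \<alpha>"
    have b: "b > 0" "\<alpha> = 1 - b" "b < 1/2" using a by (auto simp: b_def)
    have S1: "supp (mu E \<alpha> x) = {x,y,z,w}" using supp_mu[OF g, of \<alpha> x] a dx Nx by simp
    have S2: "supp (mu E \<alpha> w) = insert w {t. E w t}" using supp_mu[OF g, of \<alpha> w] a dw by simp
    have L: "\<forall>p\<in>supp (mu E \<alpha> x). \<forall>q\<in>supp (mu E \<alpha> w). f p - f q \<le> real (gdist E p q)"
    proof (intro ballI)
      fix p q assume p: "p \<in> supp (mu E \<alpha> x)" and q: "q \<in> supp (mu E \<alpha> w)"
      have "q = w \<or> q = x \<or> (E w q \<and> q \<noteq> x)" using q S2 by auto
      moreover have "p = x \<or> p = y \<or> p = z \<or> p = w" using p S1 by auto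
      moreover have "real (gdist E y w) \<ge> 2" "real (gdist E z w) \<ge> 2"
        using gdist_ge2[OF g neq(5) yw] gdist_ge2[OF g neq(6) zw] by auto
      moreover have "real (gdist E y x) \<ge> 1" "real (gdist E z x) \<ge> 1"
        using gdist_ge1[OF g neq(7)] gdist_ge1[OF g neq(8)] by auto
      moreover have "E w q \<Longrightarrow> q \<noteq> x \<Longrightarrow> real (gdist E x q) \<ge> 2"
        using gdist_ge2[OF g, of x q] Ex graph_irrefl[OF g, of w] wy by fastforce
      moreover have "E w q \<Longrightarrow> q \<noteq> x \<Longrightarrow> real (gdist E y q) \<ge> 3 \<and> real (gdist E z q) \<ge> 3"
        using far[of q] by auto
      moreover have "E w q \<Longrightarrow> real (gdist E w q) \<ge> 1"
        using gdist_ge1[OF g, of w q] graph_irrefl[OF g, of w] by fastforce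
      ultimately show "f p - f q \<le> real (gdist E p q)"
        using fx ft[of q] gdist_edge[OF g e(3)] gdist_0[of E] by auto
    qed
    have "transport E (mu E \<alpha> x) (mu E \<alpha> w) \<ge>
     (\<Sum>p\<in>supp (mu E \<alpha> x). f p * mu E \<alpha> x p) - (\<Sum>q\<in>supp (mu E \<alpha> w). f q * mu E \<alpha> w q)"
      by (rule transport_ge_f[OF g _ _ _ _ L]) (use a dx dw in auto)
    moreover have "(\<Sum>p\<in>supp (mu E \<alpha> x). f p * mu E \<alpha> x p) = \<alpha> + 4 * b / 3"
      using S1 neq fx by (simp add: mu_center mu_nb[OF g] e dx b)
    moreover have "(\<Sum>q\<in>supp (mu E \<alpha> w). f q * mu E \<alpha> w q) \<le> 0"
    proof -
      have nw: "w \<notin> {t. E w t}" using graph_irrefl[OF g] by auto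
      have "(\<Sum>q\<in>supp (mu E \<alpha> w). f q * mu E \<alpha> w q) = (\<Sum>q\<in>{t. E w t}. f q * mu E \<alpha> w q)"
        using S2 nw finw fx by simp
      also have "\<dots> = (\<Sum>q\<in>{t. E w t}. f q * (b / real (deg E w)))"
        by (rule sum.cong) (auto simp: mu_nb[OF g] b_def)
      also have "\<dots> = (\<Sum>q\<in>{t. E w t}. f q) * (b / real (deg E w))"
        by (simp only: sum_distrib_right)
      also have "\<dots> \<le> 0" using sumf b by (intro mult_nonpos_nonneg) auto
      finally show ?thesis .
    qed
    moreover have "1 + 1/3 * (1 - \<alpha>) = \<alpha> + 4 * b / 3" by (simp add: b_def field_simps)
    ultimately show "transport E (mu E \<alpha> x) (mu E \<alpha> w) \<ge> 1 + 1/3 * (1 - \<alpha>)"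
      using b by linarith
  qed (simp)
qed


lemma card3: assumes "finite A" "card A = 3" "y \<in> A" "z \<in> A" "y \<noteq> z"
  shows "\<exists>w. A = {y,z,w} \<and> w \<noteq> y \<and> w \<noteq> z"
proof -
  have "card (A - {y,z}) = 1" using assms by (simp add: card_Diff_subset)
  then obtain w where "A - {y,z} = {w}" by (auto simp: card_1_singleton_iff)
  then show ?thesis using assms(3,4) by (intro exI[of _ w]) auto
qed

lemma card4: assumes "finite A" "card A = 4" "y \<in> A" "z \<in> A" "y \<noteq> z"
  shows "\<exists>u u'. A = {y,z,u,u'} \<and> distinct [y,z,u,u']"
proof -
  have "card (A - {y,z}) = 2" using assms by (simp add: card_Diff_subset)
  then obtain u u' where uu: "A - {y,z} = {u,u'}" "u \<noteq> u'" by (meson card_2_iff)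
  have A: "A = {y,z} \<union> (A - {y,z})" using assms(3,4) by blast
  have "u \<notin> {y,z}" "u' \<notin> {y,z}" using uu(1) by blast+
  then have "A = {y,z,u,u'} \<and> distinct [y,z,u,u']" using A uu assms(5) by auto
  then show ?thesis by blast
qed

lemma card2: assumes "finite A" "card A = 2" "y \<in> A" "z \<in> A" "y \<noteq> z"
  shows "A = {y,z}"
proof -
  have "card (A - {y,z}) = 0" using assms by (simp add: card_Diff_subset)
  then have "A - {y,z} = {}" using assms(1) by simp
  then show ?thesis using assms by blast
qed

lemma card1: assumes "finite A" "card A = 1" "y \<in> A"
  shows "A = {y}"
proof -
  obtain a where "A = {a}" using assms(2) by (auto simp: card_1_singleton_iff)
  then show ?thesis using assms(3) by simp
qed

lemma tri_third:
  assumes g: "graph E" and c: "edge_in_cycle E x y 3"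
  shows "\<exists>z. E x z \<and> E y z"
proof -
  obtain vs where l: "length vs = 3" and ed: "\<forall>i<3. E (vs ! i) (vs ! ((i + 1) mod 3))"
    and i: "\<exists>i<3. {vs ! i, vs ! ((i + 1) mod 3)} = {x, y}"
    using c unfolding edge_in_cycle_def by blast
  have h1: "E (vs!0) (vs!1)" using ed[rule_format, of 0] by simp
  have h2: "E (vs!1) (vs!2)" using ed[rule_format, of 1] by (simp add: numeral_2_eq_2)
  have h3: "E (vs!2) (vs!0)" using ed[rule_format, of 2] by simp
  note h = h1 h2 h3
  have s: "E (vs!1) (vs!0)" "E (vs!2) (vs!1)" "E (vs!0) (vs!2)" using h graph_sym[OF g] by blast+
  from i obtain j where j: "j < 3" "{vs ! j, vs ! ((j + 1) mod 3)} = {x, y}" by blast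
  have "j = 0 \<or> j = 1 \<or> j = 2" using j(1) by auto
  then show ?thesis
  proof (elim disjE)
    assume "j = 0" then have "{vs!0, vs!1} = {x,y}" using j by simp
    then show ?thesis using h s by (auto simp: doubleton_eq_iff)
  next
    assume "j = 1" then have "{vs!1, vs!2} = {x,y}" using j by (simp add: numeral_2_eq_2)
    then show ?thesis using h s by (auto simp: doubleton_eq_iff)
  next
    assume "j = 2" then have "{vs!2, vs!0} = {x,y}" using j by simp
    then show ?thesis using h s by (auto simp: doubleton_eq_iff)
  qed
qed

theorem lemma7:
  fixes E :: "'a \<Rightarrow> 'a \<Rightarrow> bool" and x y :: 'a
  assumes "graph E"
    and "ricci_flat E"
    and "\<forall>v. deg E v \<le> 4"
    and "E x y"
    and "deg E x = 3"
    and "deg E y = 4"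
  shows "\<not> edge_in_cycle E x y 3"
proof
  assume cyc: "edge_in_cycle E x y 3"
  have g: "graph E" and rf: "ricci_flat E" and dmax: "\<And>v. deg E v \<le> 4" and exy: "E x y"
    and dx: "deg E x = 3" and dy: "deg E y = 4" using assms by auto
  have sym: "\<And>a b. E a b \<Longrightarrow> E b a" using graph_sym[OF g] by blast
  have irr: "\<And>a. \<not> E a a" using graph_irrefl[OF g] by blast
  have fin: "\<And>a. finite {v. E a v}" using graph_fin[OF g] by blast
  obtain z where xz: "E x z" and yz: "E y z" using tri_third[OF g cyc] by blast
  have xy: "x \<noteq> y" "x \<noteq> z" "y \<noteq> z" using exy xz yz irr by auto
  have "\<exists>w. {v. E x v} = {y,z,w} \<and> w \<noteq> y \<and> w \<noteq> z"
    by (rule card3[OF fin dx[unfolded deg_def]]) (use exy xz xy in auto)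
  then obtain w where Nx: "{v. E x v} = {y,z,w}" and wy0: "w \<noteq> y" "w \<noteq> z" by blast
  have xw2: "E x w" using Nx by blast
  have xw1: "w \<noteq> x" using xw2 irr by auto
  note xw = xw1 xw2
  have dxyzw: "distinct [x,y,z,w]" using xy wy0 xw by auto
  have "\<exists>u u'. {v. E y v} = {x,z,u,u'} \<and> distinct [x,z,u,u']"
    by (rule card4[OF fin dy[unfolded deg_def]]) (use sym[OF exy] yz xy in auto)
  then obtain u u' where Ny: "{v. E y v} = {x,z,u,u'}" and du: "distinct [x,z,u,u']" by blast
  have yu: "y \<noteq> u" "y \<noteq> u'" using Ny irr by auto
  have Eyu: "E y u" "E y u'" using Ny by auto
  show False
  proof (cases "E w y")
    case True
    then have "w \<in> {x,z,u,u'}" using Ny sym[OF True] by blast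
    then have "w = u \<or> w = u'" using xw wy0 by auto
    then show False
    proof
      assume "w = u"
      then have N2: "{v. E y v} = {x,z,w,u'}" using Ny by simp
      have "distinct [x,y,z,w,u']" using du yu xy wy0 xw \<open>w = u\<close> by auto
      then show False using L0[OF g Nx N2] rf by blast
    next
      assume "w = u'"
      then have "{v. E y v} = {x,z,w,u}" using Ny by auto
      moreover have "distinct [x,y,z,w,u]" using du yu xy wy0 xw \<open>w = u'\<close> by auto
      ultimately show False using L0[OF g Nx] rf by blast
    qed
  next
    case nwy: False
    have zN: "x \<in> {v. E z v}" "y \<in> {v. E z v}" using sym[OF xz] sym[OF yz] by auto
    have "card {v. E z v} \<ge> card {x,y}" by (rule card_mono[OF fin]) (use zN in auto)
    then have dz2: "deg E z \<ge> 2" using xy by (simp add: deg_def)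
    have "deg E z = 2 \<or> deg E z = 3 \<or> deg E z = 4" using dz2 dmax[of z] by auto
    then show False
    proof (elim disjE)
      assume "deg E z = 2"
      then have "{v. E z v} = {x,y}" by (intro card2[OF fin _ zN]) (use xy in \<open>auto simp: deg_def\<close>)
      then show False using L2a[OF g Nx _ dxyzw] rf by blast
    next
      assume "deg E z = 3"
      then have "\<exists>v. {v. E z v} = {x,y,v} \<and> v \<noteq> x \<and> v \<noteq> y"
        by (intro card3[OF fin _ zN]) (use xy in \<open>auto simp: deg_def\<close>)
      then obtain v where Nz: "{v. E z v} = {x,y,v}" "v \<noteq> x" "v \<noteq> y" by blast
      have "v \<noteq> z" using Nz irr by auto
      then have "distinct [x,y,z,v]" using Nz xy by auto
      then show False using L2b[OF g Nx Nz(1) dxyzw] rf by blast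
    next
      assume "deg E z = 4"
      then have "\<exists>v v'. {t. E z t} = {x,y,v,v'} \<and> distinct [x,y,v,v']"
        by (intro card4[OF fin _ zN]) (use xy in \<open>auto simp: deg_def\<close>)
      then obtain v v' where Nz: "{t. E z t} = {x,y,v,v'}" and dv: "distinct [x,y,v,v']" by blast
      have zv: "z \<noteq> v" "z \<noteq> v'" using Nz irr by auto
      have Ezv: "E z v" "E z v'" using Nz by auto
      have Nx': "{t. E x t} = {z,y,w}" using Nx by auto
      show False
      proof (cases "E w z")
        case True
        then have "w \<in> {x,y,v,v'}" using Nz sym[OF True] by blast
        then have "w = v \<or> w = v'" using xw wy0 by auto
        then show False
        proof
          assume "w = v"
          then have N2: "{t. E z t} = {x,y,w,v'}" using Nz by simp
          have "distinct [x,z,y,w,v']" using dv zv xy wy0 xw \<open>w = v\<close> by auto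
          then show False using L0[OF g Nx' N2] rf by blast
        next
          assume "w = v'"
          then have "{t. E z t} = {x,y,w,v}" using Nz by auto
          moreover have "distinct [x,z,y,w,v]" using dv zv xy wy0 xw \<open>w = v'\<close> by auto
          ultimately show False using L0[OF g Nx'] rf by blast
        qed
      next
        case nwz: False
        have wu: "w \<noteq> u" "w \<noteq> u'" using nwy Eyu sym[of y u] sym[of y u'] by auto
        have wv: "w \<noteq> v" "w \<noteq> v'" using nwz Ezv sym[of z v] sym[of z v'] by auto
        have g1: "\<not> gdist E w u \<le> 2"
        proof
          assume h: "gdist E w u \<le> 2"
          have "distinct [x,y,z,w,u,u']" using du xy wy0 xw yu wu by auto
          then show False using L1[OF g Nx Ny _ h] rf by blast
        qed
        have g2: "\<not> gdist E w u' \<le> 2"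
        proof
          assume h: "gdist E w u' \<le> 2"
          have "{t. E y t} = {x,z,u',u}" using Ny by auto
          moreover have "distinct [x,y,z,w,u',u]" using du xy wy0 xw yu wu by auto
          ultimately show False using L1[OF g Nx _ _ h] rf by blast
        qed
        have g3: "\<not> gdist E w v \<le> 2"
        proof
          assume h: "gdist E w v \<le> 2"
          have "distinct [x,z,y,w,v,v']" using dv xy wy0 xw zv wv by auto
          then show False using L1[OF g Nx' Nz _ h] rf by blast
        qed
        have g4: "\<not> gdist E w v' \<le> 2"
        proof
          assume h: "gdist E w v' \<le> 2"
          have "{t. E z t} = {x,y,v',v}" using Nz by auto
          moreover have "distinct [x,z,y,w,v',v]" using dv xy wy0 xw zv wv by auto
          ultimately show False using L1[OF g Nx' _ _ h] rf by blast
        qed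
        have xNw: "x \<in> {t. E w t}" using sym[OF xw2] by auto
        have "card {t. E w t} \<ge> 1" using fin[of w] xNw by (auto simp: card_gt_0_iff Suc_le_eq)
        then have "deg E w = 1 \<or> deg E w \<ge> 2" by (auto simp: deg_def)
        then show False
        proof
          assume "deg E w = 1"
          then have "{t. E w t} = {x}" using card1[OF fin _ xNw] by (simp add: deg_def)
          then show False using Lleaf[OF g Nx _ dxyzw] rf by blast
        next
          assume dw: "deg E w \<ge> 2"
          have far: "gdist E y t \<ge> 3 \<and> gdist E z t \<ge> 3" if wt: "E w t" and tx: "t \<noteq> x" for t
          proof
            have ty: "t \<noteq> y" "t \<noteq> z" "t \<noteq> w" using wt nwy nwz irr by auto
            have tu: "t \<noteq> u" "t \<noteq> u'" "t \<noteq> v" "t \<noteq> v'"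
              using gdist_1[of E w t, OF wt] g1 g2 g3 g4 by auto
            show "gdist E y t \<ge> 3"
            proof (rule gdist_ge3[OF g])
              show "y \<noteq> t" using ty by auto
              show "\<not> E y t" using Ny ty tu tx by auto
              show "\<not> (\<exists>s. E y s \<and> E s t)"
              proof
                assume "\<exists>s. E y s \<and> E s t"
                then obtain s where ys: "E y s" and st: "E s t" by blast
                have "s \<in> {x,z,u,u'}" using ys Ny by blast
                moreover have "s \<noteq> x" using st Nx ty by auto
                moreover have "s \<noteq> z" using st Nz ty tu tx by auto
                moreover have "s \<noteq> u" using gdist_2[of E w t u] wt sym[OF st] g1 by auto
                moreover have "s \<noteq> u'" using gdist_2[of E w t u'] wt sym[OF st] g2 by auto
                ultimately show False by auto
              qed
            qed
            show "gdist E z t \<ge> 3"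
            proof (rule gdist_ge3[OF g])
              show "z \<noteq> t" using ty by auto
              show "\<not> E z t" using Nz ty tu tx by auto
              show "\<not> (\<exists>s. E z s \<and> E s t)"
              proof
                assume "\<exists>s. E z s \<and> E s t"
                then obtain s where ys: "E z s" and st: "E s t" by blast
                have "s \<in> {x,y,v,v'}" using ys Nz by blast
                moreover have "s \<noteq> x" using st Nx ty by auto
                moreover have "s \<noteq> y" using st Ny ty tu tx by auto
                moreover have "s \<noteq> v" using gdist_2[of E w t v] wt sym[OF st] g3 by auto
                moreover have "s \<noteq> v'" using gdist_2[of E w t v'] wt sym[OF st] g4 by auto
                ultimately show False by auto
              qed
            qed
          qed
          have "\<not> E y w" "\<not> E z w" using nwy nwz sym[of y w] sym[of z w] by auto
          then show False using L3[OF g Nx dxyzw dw _ _ far] rf by blast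
        qed
      qed
    qed
  qed
qed


end
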